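(* Let $m\ge 1$ and let $L$ be either $L'$ or $\mathcal{R}^*$ (notation as in the context). If $a\in\mathcal{R}$ satisfies $Tr(ax)=0$ for all $x\in L$, then $a=0$.
   Context: Let $R=\mathbb{F}_3+u\mathbb{F}_3+u^2\mathbb{F}_3$ with $u^3=1$, i.e. $R=\mathbb{F}_3[u]/(u^3-1)$. For a positive integer $m$, let $\mathcal{R}=\mathbb{F}_{3^m}+u\mathbb{F}_{3^m}+u^2\mathbb{F}_{3^m}=\mathbb{F}_{3^m}[u]/(u^3-1)$. Every element of $\mathcal{R}$ can be written uniquely as $x_1+x_2(u-1)+x_3(u-1)^2$ with $x_1,x_2,x_3\in\mathbb{F}_{3^m}$; it is a unit iff $x_1\neq 0$, and $\mathcal{R}^*$ denotes the group of units. Define $Tr:\mathcal{R}\to R$ by $Tr(a+ub+u^2c)=tr(a)+u\,tr(b)+u^2tr(c)$ for $a,b,c\in\mathbb{F}_{3^m}$, where $tr$ is the absolute trace from $\mathbb{F}_{3^m}$ to $\mathbb{F}_3$. Let $\mathcal{Q}$ be the set of nonzero squares of $\mathbb{F}_{3^m}$ and $L'=\{x_1+x_2(u-1)+x_3(u-1)^2: x_1\in\mathcal{Q},\ x_2,x_3\in\mathbb{F}_{3^m}\}$, a subgroup of index $2$ of $\mathcal{R}^*$. *)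

theory Defs
  imports Main
begin

text \<open>The ring F[u]/(u^3-1) over a field F (here F = F_{3^m}); an element
  a + u b + u^2 c is represented by the coordinate triple (a, b, c).\<close>

type_synonym 'a R3 = "'a \<times> 'a \<times> 'a"

definition radd :: "'a::field R3 \<Rightarrow> 'a R3 \<Rightarrow> 'a R3" where
  "radd x y = (case x of (a,b,c) \<Rightarrow> case y of (d,e,f) \<Rightarrow> (a+d, b+e, c+f))"

text \<open>Multiplication using u^3 = 1.\<close>
definition rmul :: "'a::field R3 \<Rightarrow> 'a R3 \<Rightarrow> 'a R3" where
  "rmul x y = (case x of (a,b,c) \<Rightarrow> case y of (d,e,f) \<Rightarrow>
      (a*d + b*f + c*e, a*e + b*d + c*f, a*f + b*e + c*d))"

definition rzero :: "'a::field R3" where "rzero = (0,0,0)"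
definition rone :: "'a::field R3" where "rone = (1,0,0)"
definition ru :: "'a::field R3" where "ru = (0,1,0)"
definition rof :: "'a::field \<Rightarrow> 'a R3" where "rof c = (c,0,0)"

definition rv :: "'a::field R3" where "rv = radd ru (rof (-1))"

definition from_basis :: "'a::field \<Rightarrow> 'a \<Rightarrow> 'a \<Rightarrow> 'a R3" where
  "from_basis x1 x2 x3 = radd (rof x1) (radd (rmul (rof x2) rv) (rmul (rof x3) (rmul rv rv)))"

definition runits :: "'a::field R3 set" where
  "runits = {x. \<exists>y. rmul x y = rone}"

definition sqs :: "'a::field set" where
  "sqs = {y. \<exists>x. x \<noteq> 0 \<and> y = x^2}"

definition Lprime :: "'a::field R3 set" where
  "Lprime = {from_basis x1 x2 x3 | x1 x2 x3. x1 \<in> sqs}"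

text \<open>Absolute trace F_{3^m} \<rightarrow> F_3 (the prime field sits inside the field).\<close>
definition tr :: "nat \<Rightarrow> 'a::field \<Rightarrow> 'a" where
  "tr m x = (\<Sum>i<m. x ^ (3^i))"

definition Tr :: "nat \<Rightarrow> 'a::field R3 \<Rightarrow> 'a R3" where
  "Tr m x = (case x of (a,b,c) \<Rightarrow> (tr m a, tr m b, tr m c))"

end

theory Submission
  imports Defs "HOL-Number_Theory.Residues" "HOL-Computational_Algebra.Polynomial"
begin

lemma char3:
  assumes "m \<ge> 1" "card (UNIV :: 'a::{finite,field} set) = 3 ^ m"
  shows "(3::'a) = 0"
proof -
  have pos: "CHAR('a) > 0" by (rule finite_imp_CHAR_pos) simp
  hence pr: "prime CHAR('a)" by (rule prime_CHAR_semidom)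
  have "CHAR('a) dvd 3 ^ m" using CHAR_dvd_CARD[where 'a='a] assms(2) by simp
  hence "CHAR('a) dvd 3" using pr prime_dvd_power by blast
  note dv = this
  have le: "CHAR('a) \<le> 3" using dv by (rule dvd_imp_le) simp
  have ge: "CHAR('a) \<ge> 2" using pr by (rule prime_ge_2_nat)
  have ne: "CHAR('a) \<noteq> 2"
  proof
    assume "CHAR('a) = 2"
    with dv show False by simp
  qed
  from le ge ne have "CHAR('a) = 3" by linarith
  hence "of_nat 3 = (0::'a)" by (metis of_nat_CHAR)
  thus ?thesis by simp
qed

lemma tr_nonzero:
  assumes "m \<ge> 1" "card (UNIV :: 'a::{finite,field} set) = 3 ^ m"
  shows "\<exists>y::'a. tr m y \<noteq> 0"
proof (rule ccontr)
  assume H: "\<not> ?thesis"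
  define P :: "'a poly" where "P = (\<Sum>i<m. monom 1 (3^i))"
  have ev: "poly P x = tr m x" for x by (simp add: P_def tr_def poly_sum poly_monom)
  have inj: "inj (\<lambda>i::nat. (3::nat)^i)" by (rule injI) simp
  have "coeff P (3^(m-1)) = (\<Sum>i<m. if 3^(m-1) = (3::nat)^i then 1 else 0)"
    by (simp add: P_def coeff_sum coeff_monom)
  also have "\<dots> = (\<Sum>i\<in>{m-1}. 1)"
    using assms(1) by (intro sum.mono_neutral_cong_right) (auto dest: injD[OF inj])
  finally have "coeff P (3^(m-1)) = 1" by simp
  hence P0: "P \<noteq> 0" by auto
  have dg: "degree P \<le> 3^(m-1)" unfolding P_def
    by (intro degree_sum_le) (auto intro!: order.trans[OF degree_monom_le] power_increasing)
  have "{x. poly P x = 0} = UNIV" using H ev by auto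
  hence "card (UNIV::'a set) \<le> 3^(m-1)" using card_poly_roots_bound[OF P0] dg by simp
  moreover have "(3::nat)^(m-1) < 3^m" using assms(1) by simp
  ultimately show False using assms by simp
qed


lemma cube_add:
  assumes "(3::'a::field) = 0"
  shows "(x + y :: 'a) ^ 3 = x ^ 3 + y ^ 3"
proof -
  have "(x + y) ^ 3 = x ^ 3 + y ^ 3 + 3 * (x^2*y + x*y^2)"
    by (simp add: power3_eq_cube power2_eq_square algebra_simps)
  thus ?thesis using assms by simp
qed

lemma pow3_add:
  assumes "(3::'a::field) = 0"
  shows "(x + y :: 'a) ^ (3^i) = x ^ (3^i) + y ^ (3^i)"
proof (induction i)
  case 0 then show ?case by simp
next
  case (Suc i)
  have "(x + y) ^ (3^Suc i) = ((x+y)^(3^i))^3" by (simp add: power_mult[symmetric] mult.commute)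
  also have "\<dots> = (x^(3^i))^3 + (y^(3^i))^3" using Suc cube_add[OF assms] by simp
  also have "\<dots> = x ^ (3^Suc i) + y ^ (3^Suc i)" by (simp add: power_mult[symmetric] mult.commute)
  finally show ?case .
qed

lemma tr_add:
  assumes "(3::'a::field) = 0"
  shows "tr m (x + y :: 'a) = tr m x + tr m y"
  unfolding tr_def using pow3_add[OF assms] by (simp add: sum.distrib)

lemma tr_neg: "tr m (- x :: 'a::field) = - tr m x"
proof -
  have "(-x) ^ (3^i) = - (x ^ (3^i))" for i
    by (rule power_minus_odd) simp
  thus ?thesis unfolding tr_def by (simp add: sum_negf)
qed

lemma comp_zero:
  assumes m1: "m \<ge> 1" and card: "card (UNIV :: 'a::{finite,field} set) = 3 ^ m"
    and H: "\<And>s. s \<in> sqs \<Longrightarrow> tr m (\<alpha> * s) = (0::'a)"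
  shows "\<alpha> = 0"
proof -
  have c3: "(3::'a) = 0" by (rule char3[OF m1 card])
  have z: "(0::'a) ^ (3^i) = 0" for i :: nat by (rule zero_power) simp
  have t0: "tr m (0::'a) = 0" unfolding tr_def by (intro sum.neutral ballI z)
  have sq: "tr m (\<alpha> * x^2) = 0" for x
  proof (cases "x = 0")
    case True thus ?thesis using t0 by simp
  next
    case False thus ?thesis using H[of "x^2"] unfolding sqs_def by blast
  qed
  have two: "(2::'a) \<noteq> 0"
  proof
    assume "(2::'a) = 0"
    moreover have "(3::'a) = 2 + 1" by simp
    ultimately have "(3::'a) = 1" by simp
    with c3 show False by simp
  qed
  have all: "tr m (\<alpha> * y) = 0" for y
  proof -
    define A where "A = (y + 1) / 2"
    define B where "B = (y - 1) / 2"
    have AB1: "A - B = 1" unfolding A_def B_def using two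
      by (simp add: diff_divide_distrib[symmetric])
    have "y + 1 + (y - 1) = 2 * y" by (simp add: algebra_simps)
    hence AB2: "A + B = y" unfolding A_def B_def using two
      by (simp add: add_divide_distrib[symmetric])
    have "A^2 - B^2 = (A - B) * (A + B)" by (simp add: power2_eq_square algebra_simps)
    hence yeq: "y = A^2 - B^2" using AB1 AB2 by simp
    have "\<alpha> * y = \<alpha> * (A^2 - B^2)" by (subst yeq) (rule refl)
    also have "\<alpha> * (A^2 - B^2) = \<alpha> * A^2 + - (\<alpha> * B^2)" by (simp add: algebra_simps)
    finally have "\<alpha> * y = \<alpha> * A^2 + - (\<alpha> * B^2)" .
    hence "tr m (\<alpha> * y) = tr m (\<alpha> * A^2) + - tr m (\<alpha> * B^2)"
      by (simp only: tr_add[OF c3] tr_neg)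
    thus ?thesis using sq by simp
  qed
  show ?thesis
  proof (rule ccontr)
    assume "\<alpha> \<noteq> 0"
    obtain y0 :: 'a where y0: "tr m y0 \<noteq> 0" using tr_nonzero[OF m1 card] by blast
    have "\<alpha> * (y0 / \<alpha>) = y0" using \<open>\<alpha> \<noteq> 0\<close> by simp
    with all[of "y0 / \<alpha>"] y0 show False by simp
  qed
qed

lemma inL_lemma:
  fixes s :: "'a::field"
  assumes that: "s \<in> sqs" and L: "L = Lprime \<or> L = runits"
  shows "(s, 0, 0) \<in> L"
  using L
proof
  assume "L = Lprime"
  have "from_basis s 0 0 = (s, 0, 0)"
    by (simp add: from_basis_def radd_def rmul_def rof_def rv_def ru_def)
  hence "\<exists>x1 x2 x3. (s, 0, 0) = from_basis x1 x2 x3 \<and> x1 \<in> sqs" using that by metis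
  thus ?thesis using \<open>L = Lprime\<close> unfolding Lprime_def by simp
next
  assume "L = runits"
  have "s \<noteq> 0" using that unfolding sqs_def by auto
  hence "rmul (s, 0, 0) (1 / s, 0, 0) = rone" by (simp add: rmul_def rone_def)
  thus ?thesis using \<open>L = runits\<close> unfolding runits_def by blast
qed

theorem lemma3p1:
  fixes a :: "'a::{finite,field} R3" and m :: nat and L :: "'a R3 set"
  assumes "m \<ge> 1"
    and "card (UNIV :: 'a set) = 3 ^ m"
    and "L = Lprime \<or> L = runits"
    and "\<forall>x\<in>L. Tr m (rmul a x) = rzero"
  shows "a = rzero"
proof -
  obtain a0 a1 a2 where a: "a = (a0, a1, a2)" by (cases a) auto
  have inL: "(s, 0, 0) \<in> L" if "s \<in> sqs" for s
    using inL_lemma[OF that assms(3)] .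
  have T: "tr m (a0 * s) = 0 \<and> tr m (a1 * s) = 0 \<and> tr m (a2 * s) = 0" if "s \<in> sqs" for s
  proof -
    have "Tr m (rmul a (s, 0, 0)) = rzero" using assms(4) inL[OF that] by blast
    moreover have "rmul a (s, 0, 0) = (a0 * s, a1 * s, a2 * s)" by (simp add: a rmul_def)
    moreover have "Tr m (a0 * s, a1 * s, a2 * s) = (tr m (a0 * s), tr m (a1 * s), tr m (a2 * s))"
      by (simp add: Tr_def)
    ultimately show ?thesis by (simp add: rzero_def)
  qed
  have "a0 = 0" by (rule comp_zero[OF assms(1,2)]) (use T in blast)
  moreover have "a1 = 0" by (rule comp_zero[OF assms(1,2)]) (use T in blast)
  moreover have "a2 = 0" by (rule comp_zero[OF assms(1,2)]) (use T in blast)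
  ultimately show ?thesis by (simp add: a rzero_def)
qed

end
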